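(* If $U$ is a negative finite multiset on $\mathbb{N}^2$, then $\mathrm{BRSK}(U)$ is a negative semistandard notched bitableau.
   Context: $\mathbb{N}$ is the set of positive integers; a finite multiset on $\mathbb{N}^2$ is negative if each of its elements $(a,b)$ satisfies $a<b$. Notched tableau: finite sequence of rows $P_1,\dots,P_r$, each a left-justified, possibly empty row of boxes with positive integer entries; row strict if each row strictly increases left to right (a row is then identified with its set of entries). Notched bitableau: pair $(P,Q)$ of notched tableaux of the same shape. Termwise order on finite multisets of $\mathbb{N}$ of equal size: $\{a_1\le\dots\le a_k\}\le\{b_1\le\dots\le b_k\}$ iff $a_i\le b_i$ for all $i$; $A\lessdot B$ iff $A,B$ nonempty and $a_i<b_i$ for all $i$. "$A-C\le B-D$" means $A\sqcup D\le B\sqcup C$ (multiset union). $(P,Q)$ is semistandard if both are row strict and $P_1-Q_1\le\cdots\le P_r-Q_r$; negative if $P_i\lessdot Q_i$ for all $i$. Bounded insertion: for $b\in\mathbb{N}$, a row-strict notched tableau $P$ is semistandard on $b$ if the tableau $P^{<b}$ obtained by deleting all entries $\ge b$ has weakly decreasing row lengths (top to bottom) and weakly increasing columns. For such $P$ and $a<b$, $P\xleftarrow{b}a$ is computed by: (1) remove the entries $\ge b$ to get $P^{<b}$; (2) insert $a$ into $P^{<b}$ by row insertion: into a row, if $a$ exceeds all its entries append $a$ in a new box at the right end and stop; otherwise replace the smallest entry $\ge a$ by $a$ and insert the replaced entry into the next row the same way (a row below the last row counts as empty); the box added at the end is the new box; (3) put the removed entries back at the right ends of the rows they came from. BRSK: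 list $U=\{(a_1,b_1),\dots,(a_t,b_t)\}$ so that $b_1\ge\dots\ge b_t$ and $a_i\ge a_{i+1}$ whenever $b_i=b_{i+1}$. Start with $(P^{(0)},Q^{(0)})=(\emptyset,\emptyset)$; set $P^{(i+1)}=P^{(i)}\xleftarrow{b_{i+1}}a_{i+1}$, and obtain $Q^{(i+1)}$ by inserting $b_{i+1}$ at the left end of row $j$ of $Q^{(i)}$ (shifting that row right), where $j$ is the row of the new box. Then $\mathrm{BRSK}(U)=(P^{(t)},Q^{(t)})$. *)

theory Defs
  imports "HOL-Library.Multiset" "HOL-Library.Product_Lexorder"
begin

text \<open>Notched tableaux are lists of rows (top row first); a row is a list of entries,
  read left to right.  Entries are natural numbers, positivity is required separately.
  Row indices are 0-based internally.\<close>

type_synonym tableau = "nat list list"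

definition pos_entries :: "tableau \<Rightarrow> bool" where
  "pos_entries P \<longleftrightarrow> (\<forall>r\<in>set P. \<forall>x\<in>set r. 0 < x)"

definition row_strict :: "tableau \<Rightarrow> bool" where
  "row_strict P \<longleftrightarrow> (\<forall>r\<in>set P. sorted_wrt (<) r)"

definition same_shape :: "tableau \<Rightarrow> tableau \<Rightarrow> bool" where
  "same_shape P Q \<longleftrightarrow> length P = length Q \<and> (\<forall>i<length P. length (P ! i) = length (Q ! i))"

definition termwise_le :: "nat multiset \<Rightarrow> nat multiset \<Rightarrow> bool" where
  "termwise_le A B \<longleftrightarrow> size A = size B \<and>
     (\<forall>i<size A. sorted_list_of_multiset A ! i \<le> sorted_list_of_multiset B ! i)"

definition termwise_lt :: "nat multiset \<Rightarrow> nat multiset \<Rightarrow> bool" where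
  "termwise_lt A B \<longleftrightarrow> A \<noteq> {#} \<and> B \<noteq> {#} \<and> size A = size B \<and>
     (\<forall>i<size A. sorted_list_of_multiset A ! i < sorted_list_of_multiset B ! i)"

text \<open>\<open>A - C \<le> B - D\<close> means \<open>A \<union> D \<le> B \<union> C\<close> (multiset union).\<close>
definition diff_le :: "nat multiset \<Rightarrow> nat multiset \<Rightarrow> nat multiset \<Rightarrow> nat multiset \<Rightarrow> bool" where
  "diff_le A C B D \<longleftrightarrow> termwise_le (A + D) (B + C)"

definition semistandard_bitableau :: "tableau \<Rightarrow> tableau \<Rightarrow> bool" where
  "semistandard_bitableau P Q \<longleftrightarrow>
     pos_entries P \<and> pos_entries Q \<and> same_shape P Q \<and> row_strict P \<and> row_strict Q \<and>
     (\<forall>i. Suc i < length P \<longrightarrow>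
        diff_le (mset (P ! i)) (mset (Q ! i)) (mset (P ! Suc i)) (mset (Q ! Suc i)))"

definition negative_bitableau :: "tableau \<Rightarrow> tableau \<Rightarrow> bool" where
  "negative_bitableau P Q \<longleftrightarrow> same_shape P Q \<and>
     (\<forall>i<length P. termwise_lt (mset (P ! i)) (mset (Q ! i)))"

definition negative_mset :: "(nat \<times> nat) multiset \<Rightarrow> bool" where
  "negative_mset U \<longleftrightarrow> (\<forall>(a, b)\<in>#U. 0 < a \<and> a < b)"

text \<open>In a row, the first entry \<open>\<ge> a\<close> is the smallest such entry
  since rows are strictly increasing.\<close>
fun row_insert :: "nat \<Rightarrow> tableau \<Rightarrow> tableau \<times> nat" where
  "row_insert a [] = ([[a]], 0)"
| "row_insert a (r # rs) =
     (if \<forall>x\<in>set r. x < a then ((r @ [a]) # rs, 0)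
      else (let xs = takeWhile (\<lambda>x. x < a) r; ys = dropWhile (\<lambda>x. x < a) r;
                (rs', j) = row_insert (hd ys) rs
            in ((xs @ a # tl ys) # rs', Suc j)))"

definition bounded_insert :: "nat \<Rightarrow> nat \<Rightarrow> tableau \<Rightarrow> tableau \<times> nat" where
  "bounded_insert b a P =
     (let Pl = map (filter (\<lambda>x. x < b)) P;
          R = map (filter (\<lambda>x. b \<le> x)) P;
          (P', j) = row_insert a Pl
      in (map (\<lambda>i. P' ! i @ (if i < length R then R ! i else [])) [0..<length P'], j))"

definition add_left :: "nat \<Rightarrow> nat \<Rightarrow> tableau \<Rightarrow> tableau" where
  "add_left b j Q = (if j < length Q then Q[j := b # Q ! j] else Q @ [[b]])"

definition brsk_step :: "tableau \<times> tableau \<Rightarrow> nat \<times> nat \<Rightarrow> tableau \<times> tableau" where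
  "brsk_step PQ ab =
     (let (P, Q) = PQ; (a, b) = ab; (P', j) = bounded_insert b a P in (P', add_left b j Q))"

text \<open>The listing of \<open>U\<close>: \<open>b\<close> weakly decreasing, and \<open>a\<close> weakly decreasing among equal \<open>b\<close>.\<close>
definition brsk_list :: "(nat \<times> nat) multiset \<Rightarrow> (nat \<times> nat) list" where
  "brsk_list U = map prod.swap (rev (sorted_list_of_multiset (image_mset prod.swap U)))"

definition BRSK :: "(nat \<times> nat) multiset \<Rightarrow> tableau \<times> tableau" where
  "BRSK U = foldl brsk_step ([], []) (brsk_list U)"

end

theory Submission
  imports Defs
begin


lemma row_insert_app:
  "\<forall>x\<in>set r. x < a \<Longrightarrow> row_insert a (r#rs) = ((r@[a])#rs, 0)"
  by simp

lemma row_insert_bump: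
  "\<not>(\<forall>x\<in>set r. x < a) \<Longrightarrow> row_insert a (r#rs) =
    ((takeWhile (\<lambda>x. x<a) r @ a # tl (dropWhile (\<lambda>x. x<a) r))
       # fst (row_insert (hd (dropWhile (\<lambda>x. x<a) r)) rs),
     Suc (snd (row_insert (hd (dropWhile (\<lambda>x. x<a) r)) rs)))"
  by (simp add: Let_def split: prod.split)

declare row_insert.simps(2)[simp del]

lemma dropWhile_ne: "\<not>(\<forall>x\<in>set r. x < (a::nat)) \<Longrightarrow> dropWhile (\<lambda>x. x<a) r \<noteq> []"
  by (induction r) auto

lemma hd_dropWhile_ge: "\<not>(\<forall>x\<in>set r. x < (a::nat)) \<Longrightarrow> a \<le> hd (dropWhile (\<lambda>x. x<a) r)"
  by (induction r) auto

lemma hd_dropWhile_in: "\<not>(\<forall>x\<in>set r. x < (a::nat)) \<Longrightarrow> hd (dropWhile (\<lambda>x. x<a) r) \<in> set r"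
  by (induction r) auto

lemma hd_dropWhile_le: "sorted_wrt (<) (r::nat list) \<Longrightarrow> x \<in> set r \<Longrightarrow> \<not> x < a \<Longrightarrow> hd (dropWhile (\<lambda>x. x<a) r) \<le> x"
  by (induction r) auto

fun chain :: "tableau \<Rightarrow> nat \<Rightarrow> nat \<Rightarrow> bool" where
  "chain [] c j = False"
| "chain (r#rs) c 0 = (\<exists>x\<in>set r. c \<le> x)"
| "chain (r#rs) c (Suc j) = (\<exists>x\<in>set r. c \<le> x \<and> chain rs x j)"

lemma chain_mono: "chain T c j \<Longrightarrow> c' \<le> c \<Longrightarrow> chain T c' j"
  by (cases T; cases j) (auto intro: le_trans)

lemma chainA: "chain (fst (row_insert a T)) a (snd (row_insert a T))"
proof (induction T arbitrary: a)
  case Nil then show ?case by simp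
next
  case (Cons r rs)
  show ?case
  proof (cases "\<forall>x\<in>set r. x < a")
    case True then show ?thesis by (simp add: row_insert_app)
  next
    case False
    then have "chain (fst (row_insert (hd (dropWhile (\<lambda>x. x<a) r)) rs)) a (snd (row_insert (hd (dropWhile (\<lambda>x. x<a) r)) rs))"
      using Cons.IH[of "hd (dropWhile (\<lambda>x. x<a) r)"] chain_mono hd_dropWhile_ge by blast
    then show ?thesis using False by (simp add: row_insert_bump)
  qed
qed

lemma chainB: "(\<forall>r\<in>set T. sorted_wrt (<) r) \<Longrightarrow> chain T c k \<Longrightarrow> a \<le> c \<Longrightarrow> k < snd (row_insert a T)"
proof (induction T arbitrary: a c k)
  case Nil then show ?case by simp
next
  case (Cons r rs)
  obtain x where x: "x \<in> set r" "c \<le> x" and xk: "k = 0 \<or> (\<exists>k'. k = Suc k' \<and> chain rs x k')"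
    using Cons.prems(2) by (cases k) auto
  have F: "\<not>(\<forall>x\<in>set r. x < a)" using x Cons.prems(3) by force
  let ?y = "hd (dropWhile (\<lambda>x. x<a) r)"
  have yx: "?y \<le> x" using hd_dropWhile_le[of r x a] Cons.prems(1) x Cons.prems(3) by auto
  show ?case
  proof (cases k)
    case 0 then show ?thesis using F by (simp add: row_insert_bump)
  next
    case (Suc k')
    then have "chain rs x k'" using xk by auto
    then have "k' < snd (row_insert ?y rs)" using Cons.IH[of x k' ?y] Cons.prems(1) yx by auto
    then show ?thesis using F Suc by (simp add: row_insert_bump)
  qed
qed

lemma bump_len: "dropWhile P r \<noteq> [] \<Longrightarrow> length (takeWhile P r @ a # tl (dropWhile P r)) = length r"
proof -
  assume "dropWhile P r \<noteq> []"
  then have "length (dropWhile P r) = Suc (length (tl (dropWhile P r)))" by (cases "dropWhile P r") auto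
  moreover have "length r = length (takeWhile P r) + length (dropWhile P r)"
    by (metis length_append takeWhile_dropWhile_id)
  ultimately show ?thesis by simp
qed

lemma ri_len: "length (fst (row_insert a T)) = (if snd (row_insert a T) = length T then Suc (length T) else length T) \<and> snd (row_insert a T) \<le> length T"
proof (induction T arbitrary: a)
  case Nil then show ?case by simp
next
  case (Cons r rs)
  show ?case
  proof (cases "\<forall>x\<in>set r. x < a")
    case True then show ?thesis by (simp add: row_insert_app)
  next
    case False
    then show ?thesis using Cons.IH[of "hd (dropWhile (\<lambda>x. x<a) r)"] by (simp add: row_insert_bump)
  qed
qed

lemma ri_nth_len: "i < length (fst (row_insert a T)) \<Longrightarrow> length (fst (row_insert a T) ! i) = (if i < length T then length (T!i) else 0) + (if i = snd (row_insert a T) then 1 else 0)"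
proof (induction T arbitrary: a i)
  case Nil then show ?case by simp
next
  case (Cons r rs)
  show ?case
  proof (cases "\<forall>x\<in>set r. x < a")
    case True then show ?thesis using Cons.prems by (cases i) (auto simp add: row_insert_app)
  next
    case False
    note dn = dropWhile_ne[OF False]
    show ?thesis
    proof (cases i)
      case 0 then show ?thesis using False bump_len[OF dn] by (simp add: row_insert_bump)
    next
      case (Suc i')
      then show ?thesis using False Cons.prems Cons.IH[of i' "hd (dropWhile (\<lambda>x. x<a) r)"] by (simp add: row_insert_bump)
    qed
  qed
qed

lemma ri_set: "set (concat (fst (row_insert a T))) \<subseteq> insert a (set (concat T))"
proof (induction T arbitrary: a)
  case Nil then show ?case by simp
next
  case (Cons r rs)
  show ?case
  proof (cases "\<forall>x\<in>set r. x < a")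
    case True then show ?thesis by (auto simp add: row_insert_app)
  next
    case False
    have "set (takeWhile (\<lambda>x. x<a) r) \<subseteq> set r" using set_takeWhileD by fast
    moreover have "set (tl (dropWhile (\<lambda>x. x<a) r)) \<subseteq> set r"
      by (metis list.set_sel(2) set_dropWhileD subsetI tl_Nil)
    ultimately show ?thesis using False Cons.IH[of "hd (dropWhile (\<lambda>x. x<a) r)"] hd_dropWhile_in[OF False]
      by (auto simp add: row_insert_bump)
  qed
qed

lemma ri_ne: "fst (row_insert a T) \<noteq> []"
  by (cases T; cases "\<forall>x\<in>set (hd T). x < a") (auto simp add: row_insert_app row_insert_bump)

definition cnt_lt :: "nat \<Rightarrow> nat list \<Rightarrow> nat" where
  "cnt_lt t r = length (filter (\<lambda>x. x < t) r)"
definition cnt_ge :: "nat \<Rightarrow> nat list \<Rightarrow> nat" where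
  "cnt_ge t r = length (filter (\<lambda>x. t \<le> x) r)"

lemma cnt_lt_simps[simp]: "cnt_lt t [] = 0" "cnt_lt t (x#xs) = (if x < t then Suc (cnt_lt t xs) else cnt_lt t xs)"
  "cnt_lt t (xs @ ys) = cnt_lt t xs + cnt_lt t ys"
  by (auto simp: cnt_lt_def)
lemma cnt_ge_simps[simp]: "cnt_ge t [] = 0" "cnt_ge t (x#xs) = (if t \<le> x then Suc (cnt_ge t xs) else cnt_ge t xs)"
  "cnt_ge t (xs @ ys) = cnt_ge t xs + cnt_ge t ys"
  by (auto simp: cnt_ge_def)

lemma cnt_lt_le_len: "cnt_lt t r \<le> length r" by (simp add: cnt_lt_def)
lemma cnt_ge_le_len: "cnt_ge t r \<le> length r" by (simp add: cnt_ge_def)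
lemma cnt_lt_ge: "cnt_lt t r + cnt_ge t r = length r"
  by (induction r) auto

lemma cnt_lt_mono: "y \<le> t \<Longrightarrow> cnt_lt y r \<le> cnt_lt t r"
  by (induction r) auto
lemma cnt_ge_mono: "y \<le> t \<Longrightarrow> cnt_ge t r \<le> cnt_ge y r"
  by (induction r) auto
lemma cnt_lt_strict: "y \<in> set r \<Longrightarrow> y < t \<Longrightarrow> cnt_lt y r < cnt_lt t r"
proof (induction r)
  case Nil then show ?case by simp
next
  case (Cons x xs)
  show ?case
  proof (cases "x = y")
    case True then show ?thesis using Cons.prems cnt_lt_mono[of y t xs] by auto
  next
    case False then show ?thesis using Cons by auto
  qed
qed
lemma cnt_lt_cong: "(\<And>x. x \<in> set s \<Longrightarrow> (x < t \<longleftrightarrow> x < y)) \<Longrightarrow> cnt_lt t s = cnt_lt y s"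
  by (induction s) auto
lemma cnt_lt_all: "(\<And>x. x \<in> set s \<Longrightarrow> x < t) \<Longrightarrow> cnt_lt t s = length s"
  by (induction s) auto
lemma cnt_ge_all: "(\<And>x. x \<in> set s \<Longrightarrow> t \<le> x) \<Longrightarrow> cnt_ge t s = length s"
  by (induction s) auto
lemma cnt_lt_none: "(\<And>x. x \<in> set s \<Longrightarrow> t \<le> x) \<Longrightarrow> cnt_lt t s = 0"
  by (induction s) (auto simp: leD)
lemma cnt_ge_none: "(\<And>x. x \<in> set s \<Longrightarrow> x < t) \<Longrightarrow> cnt_ge t s = 0"
  by (simp add: cnt_ge_def filter_empty_conv not_le)
lemma cnt_lt_filter: "cnt_lt t (filter (\<lambda>x. x < b) s) = cnt_lt (min t b) s"
  by (induction s) auto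

lemma bump_cnt:
  assumes "\<not>(\<forall>x\<in>set r. x < (a::nat))"
  shows "cnt_lt t (takeWhile (\<lambda>x. x<a) r @ a # tl (dropWhile (\<lambda>x. x<a) r)) + (if hd (dropWhile (\<lambda>x. x<a) r) < t then 1 else 0)
       = cnt_lt t r + (if a < t then 1 else 0)"
proof -
  have dn: "dropWhile (\<lambda>x. x<a) r \<noteq> []" using dropWhile_ne[OF assms] .
  have "r = takeWhile (\<lambda>x. x<a) r @ hd (dropWhile (\<lambda>x. x<a) r) # tl (dropWhile (\<lambda>x. x<a) r)"
    using dn by simp
  then have "cnt_lt t r = cnt_lt t (takeWhile (\<lambda>x. x<a) r @ hd (dropWhile (\<lambda>x. x<a) r) # tl (dropWhile (\<lambda>x. x<a) r))"
    by (rule arg_cong)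
  then show ?thesis by (simp del: list.collapse)
qed

lemma bump_sorted:
  assumes "\<not>(\<forall>x\<in>set r. x < (a::nat))" "sorted_wrt (<) r"
  shows "sorted_wrt (<) (takeWhile (\<lambda>x. x<a) r @ a # tl (dropWhile (\<lambda>x. x<a) r))"
proof -
  have dn: "dropWhile (\<lambda>x. x<a) r \<noteq> []" using dropWhile_ne[OF assms(1)] .
  define y where "y = hd (dropWhile (\<lambda>x. x<a) r)"
  define tw where "tw = takeWhile (\<lambda>x. x<a) r"
  define rest where "rest = tl (dropWhile (\<lambda>x. x<a) r)"
  have r: "r = tw @ y # rest"
    using dn unfolding tw_def y_def rest_def by simp
  have s: "sorted_wrt (<) (tw @ y # rest)"
    using subst[OF r, of "sorted_wrt (<)"] assms(2) by blast
  have ya: "a \<le> y" using hd_dropWhile_ge[OF assms(1)] y_def by simp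
  have tw: "\<forall>x\<in>set tw. x < a" unfolding tw_def by (meson set_takeWhileD)
  have s1: "sorted_wrt (<) tw" and s2: "sorted_wrt (<) rest" and s3: "\<forall>z\<in>set rest. y < z"
    and s4: "\<forall>x\<in>set tw. \<forall>z\<in>set rest. x < z"
    using s by (simp_all add: sorted_wrt_append)
  have "sorted_wrt (<) (a # rest)" using s2 s3 ya by auto
  moreover have "\<forall>x\<in>set tw. \<forall>z\<in>set (a # rest). x < z" using tw s4 by simp
  ultimately have "sorted_wrt (<) (tw @ a # rest)" using s1 by (simp only: sorted_wrt_append)
  then show ?thesis unfolding tw_def rest_def .
qed

definition dom_row :: "nat list \<Rightarrow> nat list \<Rightarrow> bool" where
  "dom_row r s \<longleftrightarrow> (\<forall>t. cnt_lt t s \<le> cnt_lt t r)"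

fun ss :: "tableau \<Rightarrow> bool" where
  "ss [] = True"
| "ss (r # rs) = (sorted_wrt (<) r \<and> ss rs \<and> (rs \<noteq> [] \<longrightarrow> dom_row r (hd rs)))"

lemma ri_hd1: "(\<forall>x\<in>set (if rs = [] then [] else hd rs). x < y) \<Longrightarrow> hd (fst (row_insert y rs)) = (if rs = [] then [] else hd rs) @ [y]"
proof (cases rs)
  case Nil then show ?thesis by simp
next
  case (Cons s ss)
  assume "\<forall>x\<in>set (if rs = [] then [] else hd rs). x < y"
  then have "\<forall>x\<in>set s. x < y" using Cons by simp
  then show ?thesis using Cons by (simp add: row_insert_app)
qed

lemma ri_hd2: "\<not>(\<forall>x\<in>set (if rs = [] then [] else hd rs). x < y) \<Longrightarrow> hd (fst (row_insert y rs)) =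
  takeWhile (\<lambda>x. x<y) (if rs = [] then [] else hd rs) @ y # tl (dropWhile (\<lambda>x. x<y) (if rs = [] then [] else hd rs))"
proof (cases rs)
  case Nil then show ?thesis by simp
next
  case (Cons s ss)
  assume "\<not>(\<forall>x\<in>set (if rs = [] then [] else hd rs). x < y)"
  then have F: "\<not>(\<forall>x\<in>set s. x < y)" using Cons by simp
  show ?thesis using Cons by (simp only: row_insert_bump[OF F] list.sel fst_conv if_False list.distinct(2)) 
qed

lemma ss_ri: "ss T \<Longrightarrow> ss (fst (row_insert a T))"
proof (induction T arbitrary: a)
  case Nil then show ?case by simp
next
  case (Cons r rs)
  have sr: "sorted_wrt (<) r" and ssr: "ss rs" and dr: "rs \<noteq> [] \<longrightarrow> dom_row r (hd rs)" using Cons.prems by auto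
  show ?case
  proof (cases "\<forall>x\<in>set r. x < a")
    case True
    have "sorted_wrt (<) (r @ [a])" using sr True by (simp add: sorted_wrt_append)
    moreover have "rs \<noteq> [] \<longrightarrow> dom_row (r @ [a]) (hd rs)" using dr unfolding dom_row_def
      by (metis cnt_lt_simps(3) le_add1 le_trans)
    ultimately show ?thesis using True ssr by (simp add: row_insert_app)
  next
    case False
    define y where "y = hd (dropWhile (\<lambda>x. x<a) r)"
    define r' where "r' = takeWhile (\<lambda>x. x<a) r @ a # tl (dropWhile (\<lambda>x. x<a) r)"
    define s where "s = (if rs = [] then [] else hd rs)"
    have yr: "y \<in> set r" using hd_dropWhile_in[OF False] y_def by simp
    have ay: "a \<le> y" using hd_dropWhile_ge[OF False] y_def by simp
    have idR: "\<And>t. cnt_lt t r' + (if y < t then 1 else 0) = cnt_lt t r + (if a < t then 1 else 0)"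
      using bump_cnt[OF False] y_def r'_def by simp
    have drs: "dom_row r s" using dr s_def unfolding dom_row_def by auto
    have ss_s: "sorted_wrt (<) s" using Cons.prems s_def by (cases rs) auto
    have sr': "sorted_wrt (<) r'" using bump_sorted[OF False sr] r'_def by simp
    have rs'ss: "ss (fst (row_insert y rs))" using Cons.IH[OF ssr] .
    have key: "\<And>t. y < t \<Longrightarrow> cnt_lt y r < cnt_lt t r" using cnt_lt_strict[OF yr] .
    have dom': "dom_row r' (hd (fst (row_insert y rs)))"
    proof (cases "\<forall>x\<in>set s. x < y")
      case True
      have h: "hd (fst (row_insert y rs)) = s @ [y]" using ri_hd1[of rs y, folded s_def] True by blast
      show ?thesis unfolding dom_row_def h
      proof
        fix t
        show "cnt_lt t (s @ [y]) \<le> cnt_lt t r'"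
        proof (cases "y < t")
          case True
          have "cnt_lt t s = cnt_lt y s" using \<open>\<forall>x\<in>set s. x < y\<close> True by (intro cnt_lt_cong) auto
          moreover have "cnt_lt y s \<le> cnt_lt y r" using drs dom_row_def by auto
          ultimately show ?thesis using idR[of t] key[OF True] True ay by simp
        next
          case False
          then show ?thesis using idR[of t] drs[unfolded dom_row_def, rule_format, of t] by simp
        qed
      qed
    next
      case F2: False
      define z where "z = hd (dropWhile (\<lambda>x. x<y) s)"
      define s'' where "s'' = takeWhile (\<lambda>x. x<y) s @ y # tl (dropWhile (\<lambda>x. x<y) s)"
      have h: "hd (fst (row_insert y rs)) = s''" using ri_hd2[of rs y, folded s_def] F2 s''_def by blast
      have idS: "\<And>t. cnt_lt t s'' + (if z < t then 1 else 0) = cnt_lt t s + (if y < t then 1 else 0)"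
        using bump_cnt[OF F2] z_def s''_def by simp
      have zmin: "\<And>x. x \<in> set s \<Longrightarrow> \<not> x < y \<Longrightarrow> z \<le> x" using hd_dropWhile_le[OF ss_s] z_def by blast
      show ?thesis unfolding dom_row_def h
      proof
        fix t
        show "cnt_lt t s'' \<le> cnt_lt t r'"
        proof (cases "y < t")
          case True
          show ?thesis
          proof (cases "z < t")
            case True
            then show ?thesis using idR[of t] idS[of t] drs[unfolded dom_row_def, rule_format, of t] \<open>y < t\<close> ay by simp
          next
            case False
            have "cnt_lt t s = cnt_lt y s"
            proof (rule cnt_lt_cong)
              fix x assume "x \<in> set s"
              then show "x < t \<longleftrightarrow> x < y" using zmin[of x] False \<open>y < t\<close> by (cases "x < y") auto
            qed
            moreover have "cnt_lt y s \<le> cnt_lt y r" using drs dom_row_def by auto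
            ultimately show ?thesis using idR[of t] idS[of t] key[OF True] True ay False by simp
          qed
        next
          case False
          then show ?thesis using idR[of t] idS[of t] drs[unfolded dom_row_def, rule_format, of t] by simp
        qed
      qed
    qed
    have e: "row_insert a (r#rs) = (r' # fst (row_insert y rs), Suc (snd (row_insert y rs)))"
      unfolding y_def r'_def by (rule row_insert_bump[OF False])
    obtain s1 ss1 where rs': "fst (row_insert y rs) = s1 # ss1" using ri_ne[of y rs] by (cases "fst (row_insert y rs)") auto
    have "ss (r' # s1 # ss1)" using sr' rs'ss dom' unfolding rs' by simp
    then show ?thesis unfolding e rs' by simp
  qed
qed

lemma ss_nth_dom: "ss T \<Longrightarrow> Suc i < length T \<Longrightarrow> dom_row (T!i) (T!Suc i)"
proof (induction T arbitrary: i)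
  case Nil then show ?case by simp
next
  case (Cons r rs)
  then show ?case by (cases i) (auto simp: hd_conv_nth)
qed

lemma ss_sorted: "ss T \<Longrightarrow> r \<in> set T \<Longrightarrow> sorted_wrt (<) r"
  by (induction T) auto

lemma ss_filter: "ss T \<Longrightarrow> ss (map (filter (\<lambda>x. x < b)) T)"
proof (induction T)
  case Nil then show ?case by simp
next
  case (Cons r rs)
  then show ?case by (cases rs) (auto simp: dom_row_def cnt_lt_filter sorted_wrt_filter)
qed

lemma dom_len: "dom_row r s \<Longrightarrow> length s \<le> length r"
proof -
  assume d: "dom_row r s"
  define t where "t = Suc (Max (insert 0 (set (r @ s))))"
  have "\<And>x. x \<in> set (r @ s) \<Longrightarrow> x < t" unfolding t_def
    by (simp add: le_imp_less_Suc)
  then have "cnt_lt t s = length s" "cnt_lt t r = length r" by (auto intro: cnt_lt_all)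
  then show ?thesis using d dom_row_def by metis
qed

lemma tw_aux:
  fixes A B :: "nat multiset"
  assumes sz: "size A = size B"
    and c: "\<And>t. size (filter_mset (\<lambda>x. t \<le> x) A) \<le> size (filter_mset (\<lambda>x. t + d \<le> x) B)"
    and k: "k < size A"
  shows "sorted_list_of_multiset A ! k + d \<le> sorted_list_of_multiset B ! k"
proof (rule ccontr)
  define a where "a = sorted_list_of_multiset A"
  define b where "b = sorted_list_of_multiset B"
  define n where "n = size A"
  have la: "length a = n" unfolding a_def n_def by (metis mset_sorted_list_of_multiset size_mset)
  have lb: "length b = n" unfolding b_def n_def sz by (metis mset_sorted_list_of_multiset size_mset)
  have sa: "sorted a" and sb: "sorted b" unfolding a_def b_def by auto
  assume "\<not> ?thesis"
  then have lt: "b ! k < a ! k + d" unfolding a_def b_def by simp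
  define t where "t = a ! k"
  have "size (filter_mset (\<lambda>x. t \<le> x) A) = length (filter (\<lambda>x. t \<le> x) a)"
    unfolding a_def by (metis mset_filter mset_sorted_list_of_multiset size_mset)
  also have "\<dots> = card {i. i < n \<and> t \<le> a ! i}" using la by (simp add: length_filter_conv_card)
  finally have e1: "size (filter_mset (\<lambda>x. t \<le> x) A) = card {i. i < n \<and> t \<le> a ! i}" .
  have "size (filter_mset (\<lambda>x. t + d \<le> x) B) = length (filter (\<lambda>x. t + d \<le> x) b)"
    unfolding b_def by (metis mset_filter mset_sorted_list_of_multiset size_mset)
  also have "\<dots> = card {i. i < n \<and> t + d \<le> b ! i}" using lb by (simp add: length_filter_conv_card)
  finally have e2: "size (filter_mset (\<lambda>x. t + d \<le> x) B) = card {i. i < n \<and> t + d \<le> b ! i}" .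
  have kn: "k < n" using k n_def by simp
  have "{k..<n} \<subseteq> {i. i < n \<and> t \<le> a ! i}"
    using sorted_nth_mono[OF sa] la unfolding t_def by auto
  moreover have "finite {i. i < n \<and> t \<le> a ! i}" by simp
  ultimately have "card {k..<n} \<le> card {i. i < n \<and> t \<le> a ! i}" using card_mono by blast
  then have c1: "n - k \<le> card {i. i < n \<and> t \<le> a ! i}" by simp
  have "{i. i < n \<and> t + d \<le> b ! i} \<subseteq> {Suc k..<n}"
  proof
    fix i assume i: "i \<in> {i. i < n \<and> t + d \<le> b ! i}"
    have "\<not> i \<le> k"
    proof
      assume "i \<le> k"
      then have "b ! i \<le> b ! k" using sorted_nth_mono[OF sb] lb kn by auto
      then show False using i lt t_def by auto
    qed
    then show "i \<in> {Suc k..<n}" using i by auto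
  qed
  then have "card {i. i < n \<and> t + d \<le> b ! i} \<le> card {Suc k..<n}"
    by (intro card_mono) auto
  then have c2: "card {i. i < n \<and> t + d \<le> b ! i} \<le> n - Suc k" by simp
  have "card {i. i < n \<and> t \<le> a ! i} \<le> card {i. i < n \<and> t + d \<le> b ! i}" using c[of t] e1 e2 by simp
  then show False using c1 c2 kn by linarith
qed

lemma size_filter_mset_cnt: "size (filter_mset (\<lambda>x. t \<le> x) (mset r)) = cnt_ge t r"
  unfolding cnt_ge_def by (metis mset_filter size_mset)

lemma termwise_le_I:
  assumes "size A = size B" "\<And>t. size (filter_mset (\<lambda>x. t \<le> x) A) \<le> size (filter_mset (\<lambda>x. t \<le> x) B)"
  shows "termwise_le A B"
  unfolding termwise_le_def using tw_aux[of A B 0] assms by auto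

lemma termwise_lt_I:
  assumes "A \<noteq> {#}" "size A = size B" "\<And>t. size (filter_mset (\<lambda>x. t \<le> x) A) \<le> size (filter_mset (\<lambda>x. Suc t \<le> x) B)"
  shows "termwise_lt A B"
proof -
  have "\<And>k. k < size A \<Longrightarrow> sorted_list_of_multiset A ! k + 1 \<le> sorted_list_of_multiset B ! k"
    using tw_aux[of A B 1] assms by auto
  then show ?thesis unfolding termwise_lt_def using assms by fastforce
qed



definition Inv :: "tableau \<Rightarrow> tableau \<Rightarrow> nat \<Rightarrow> nat \<Rightarrow> nat \<Rightarrow> bool" where
  "Inv P Q m la jl \<longleftrightarrow>
   length P = length Q \<and> (\<forall>i<length P. length (P!i) = length (Q!i)) \<and>
   row_strict P \<and> row_strict Q \<and> pos_entries P \<and> pos_entries Q \<and>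
   (\<forall>r\<in>set Q. r \<noteq> []) \<and> (\<forall>r\<in>set Q. \<forall>x\<in>set r. m \<le> x) \<and>
   ss (map (filter (\<lambda>x. x < m)) P) \<and>
   (\<forall>t i. Suc i < length P \<longrightarrow> cnt_ge t (P!i) + cnt_ge t (Q!Suc i) \<le> cnt_ge t (P!Suc i) + cnt_ge t (Q!i)) \<and>
   (\<forall>t i. i < length P \<longrightarrow> cnt_ge t (P!i) \<le> cnt_ge (Suc t) (Q!i)) \<and>
   (\<forall>i<length Q. m \<in> set (Q!i) \<longrightarrow> i \<le> jl \<and> chain (map (filter (\<lambda>x. x < m)) P) la jl)"

lemma cnt_ge_filter: "b \<le> t \<Longrightarrow> cnt_ge t (filter (\<lambda>x. b \<le> x) r) = cnt_ge t r"
  by (induction r) auto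

lemma len_filter_split: "length (filter (\<lambda>x. x < (b::nat)) r) + length (filter (\<lambda>x. b \<le> x) r) = length r"
  using cnt_lt_ge[of b r] unfolding cnt_lt_def cnt_ge_def .

lemma Inv_step:
  assumes I: "Inv P Q m la jl" and a: "0 < a" "a < b" and bm: "b < m \<or> (b = m \<and> a \<le> la)"
  shows "Inv (fst (brsk_step (P,Q) (a,b))) (snd (brsk_step (P,Q) (a,b))) b a (snd (bounded_insert b a P))"
proof -
  define T where "T = map (filter (\<lambda>x. x<b)) P"
  define T' where "T' = fst (row_insert a T)"
  define j where "j = snd (row_insert a T)"
  define P' where "P' = map (\<lambda>i. T'!i @ (if i < length P then filter (\<lambda>x. b \<le> x) (P!i) else [])) [0..<length T']"
  define Q' where "Q' = add_left b j Q"
  have bi: "bounded_insert b a P = (P', j)"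
    unfolding bounded_insert_def Let_def T_def[symmetric] P'_def T'_def j_def
    by (simp split: prod.split)
  have bs: "brsk_step (P,Q) (a,b) = (P', Q')" using bi by (simp add: brsk_step_def Q'_def)
  from I have
    I1: "length P = length Q" and I2: "\<forall>i<length P. length (P!i) = length (Q!i)" and
    I3: "row_strict P" and I4: "row_strict Q" and I5: "pos_entries P" and I6: "pos_entries Q" and
    I7: "\<forall>r\<in>set Q. r \<noteq> []" and I8: "\<forall>r\<in>set Q. \<forall>x\<in>set r. m \<le> x" and
    I9: "ss (map (filter (\<lambda>x. x < m)) P)" and
    I10: "\<forall>t i. Suc i < length P \<longrightarrow> cnt_ge t (P!i) + cnt_ge t (Q!Suc i) \<le> cnt_ge t (P!Suc i) + cnt_ge t (Q!i)" and
    I11: "\<forall>t i. i < length P \<longrightarrow> cnt_ge t (P!i) \<le> cnt_ge (Suc t) (Q!i)" and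
    I12: "\<forall>i<length Q. m \<in> set (Q!i) \<longrightarrow> i \<le> jl \<and> chain (map (filter (\<lambda>x. x < m)) P) la jl"
    unfolding Inv_def by blast+
  have bm': "b \<le> m" using bm by auto
  have lenT: "length T = length P" unfolding T_def by simp
  have ri: "length T' = (if j = length P then Suc (length P) else length P)" "j \<le> length P"
    using ri_len[of a T] lenT unfolding T'_def j_def by auto
  have lenP': "length P' = length T'" unfolding P'_def by simp
  have P'nth: "\<And>i. i < length T' \<Longrightarrow> P'!i = T'!i @ (if i < length P then filter (\<lambda>x. b \<le> x) (P!i) else [])"
    unfolding P'_def by simp
  have lenQ': "length Q' = length T'" unfolding Q'_def add_left_def using ri I1 by auto
  have Q'nth: "\<And>i. i < length T' \<Longrightarrow> Q'!i = (if i < length Q then (if i = j then b # Q!i else Q!i) else [b])"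
    unfolding Q'_def add_left_def using ri I1 by (auto simp: nth_append)
  have T'len: "\<And>i. i < length T' \<Longrightarrow> length (T'!i) = (if i < length P then length (filter (\<lambda>x. x<b) (P!i)) else 0) + (if i = j then 1 else 0)"
    using ri_nth_len[of _ a T] lenT unfolding T'_def j_def T_def by auto
  have Tel: "\<forall>x\<in>set (concat T). x < b \<and> 0 < x"
    using I5 unfolding T_def pos_entries_def by auto
  have T'el: "\<And>i x. i < length T' \<Longrightarrow> x \<in> set (T'!i) \<Longrightarrow> x < b \<and> 0 < x"
  proof -
    fix i x assume "i < length T'" "x \<in> set (T'!i)"
    then have "x \<in> set (concat T')" using nth_mem by fastforce
    then have "x = a \<or> x \<in> set (concat T)" using ri_set[of a T] unfolding T'_def by auto
    then show "x < b \<and> 0 < x" using Tel a by auto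
  qed
  have ssT: "ss T"
  proof -
    have "T = map (filter (\<lambda>x. x < b)) (map (filter (\<lambda>x. x < m)) P)"
      unfolding T_def using bm' by (auto intro!: filter_cong)
    then show ?thesis using ss_filter[OF I9] by simp
  qed
  have ssT': "ss T'" unfolding T'_def using ss_ri[OF ssT] .
  have T'dom: "\<And>i. Suc i < length T' \<Longrightarrow> dom_row (T'!i) (T'!Suc i)" using ss_nth_dom[OF ssT'] .
  have T'sorted: "\<And>i. i < length T' \<Longrightarrow> sorted_wrt (<) (T'!i)" using ss_sorted[OF ssT'] by auto
  have filtP': "map (filter (\<lambda>x. x < b)) P' = T'"
  proof (rule nth_equalityI)
    show "length (map (filter (\<lambda>x. x < b)) P') = length T'" using lenP' by simp
  next
    fix i assume "i < length (map (filter (\<lambda>x. x < b)) P')"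
    then have i: "i < length T'" using lenP' by simp
    have "filter (\<lambda>x. x < b) (T'!i) = T'!i" using T'el[OF i] by (auto intro: filter_True)
    moreover have "filter (\<lambda>x. x < b) (if i < length P then filter (\<lambda>x. b \<le> x) (P!i) else []) = []"
      by (auto simp: filter_empty_conv)
    ultimately show "map (filter (\<lambda>x. x < b)) P' ! i = T' ! i" using P'nth[OF i] i lenP' by simp
  qed
  have shape: "\<And>i. i < length T' \<Longrightarrow> length (P'!i) = length (Q'!i)"
  proof -
    fix i assume i: "i < length T'"
    show "length (P'!i) = length (Q'!i)"
    proof (cases "i < length P")
      case True
      then show ?thesis using P'nth[OF i] Q'nth[OF i] T'len[OF i] I1 I2 len_filter_split[of b "P!i"] by auto
    next
      case False
      then have "i = length P" "j = length P" using i ri by (auto split: if_splits)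
      then show ?thesis using P'nth[OF i] Q'nth[OF i] T'len[OF i] I1 by auto
    qed
  qed
  have Q'ge: "\<And>i x. i < length T' \<Longrightarrow> x \<in> set (Q'!i) \<Longrightarrow> b \<le> x"
    using Q'nth I8 bm' I1 by (auto split: if_splits dest!: nth_mem intro: le_trans) 
  have jl_lt: "\<And>i. i < length Q \<Longrightarrow> b \<in> set (Q!i) \<Longrightarrow> i \<le> jl \<and> jl < j"
  proof -
    fix i assume i: "i < length Q" and bi: "b \<in> set (Q!i)"
    have "m \<le> b" using I8 i bi nth_mem by blast
    then have bm2: "b = m" "a \<le> la" using bm by auto
    have c: "i \<le> jl" "chain (map (filter (\<lambda>x. x < m)) P) la jl" using I12 i bi bm2 by auto
    have "chain T la jl" using c(2) bm2 unfolding T_def by simp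
    moreover have "\<forall>r\<in>set T. sorted_wrt (<) r" using ss_sorted[OF ssT] by auto
    ultimately have "jl < j" using chainB bm2 unfolding j_def by blast
    then show "i \<le> jl \<and> jl < j" using c by auto
  qed
  have lenTP: "length P \<le> length T'" using ri by auto
  have cP_hi: "\<And>i t. i < length T' \<Longrightarrow> b \<le> t \<Longrightarrow> cnt_ge t (P'!i) = (if i < length P then cnt_ge t (P!i) else 0)"
  proof -
    fix i t assume i: "i < length T'" and bt: "b \<le> t"
    have "cnt_ge t (T'!i) = 0" using T'el[OF i] bt by (intro cnt_ge_none) fastforce
    then show "cnt_ge t (P'!i) = (if i < length P then cnt_ge t (P!i) else 0)"
      using P'nth[OF i] cnt_ge_filter[OF bt] by simp
  qed
  have cP_lo: "\<And>i t. i < length T' \<Longrightarrow> t \<le> b \<Longrightarrow> cnt_lt t (P'!i) = cnt_lt t (T'!i)"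
  proof -
    fix i t assume i: "i < length T'" and bt: "t \<le> b"
    have "cnt_lt t (if i < length P then filter (\<lambda>x. b \<le> x) (P!i) else []) = 0"
      using bt by (intro cnt_lt_none) (auto split: if_splits)
    then show "cnt_lt t (P'!i) = cnt_lt t (T'!i)" using P'nth[OF i] by simp
  qed
  have cQ_lo: "\<And>i t. i < length T' \<Longrightarrow> t \<le> b \<Longrightarrow> cnt_ge t (Q'!i) = length (Q'!i)"
    using Q'ge by (meson cnt_ge_all le_trans)
  have cQ_hi: "\<And>i t. i < length T' \<Longrightarrow> b < t \<Longrightarrow> cnt_ge t (Q'!i) = (if i < length Q then cnt_ge t (Q!i) else 0)"
    using Q'nth by auto
  have cQ_mono: "\<And>i t. i < length Q \<Longrightarrow> cnt_ge t (Q!i) \<le> cnt_ge t (Q'!i)"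
  proof -
    fix i t assume i: "i < length Q"
    then have i': "i < length T'" using lenTP I1 by simp
    show "cnt_ge t (Q!i) \<le> cnt_ge t (Q'!i)" using Q'nth[OF i'] i by auto
  qed
  have J1: "length P' = length Q'" using lenP' lenQ' by simp
  have J2: "\<forall>i<length P'. length (P'!i) = length (Q'!i)" using shape lenP' by simp
  have J3: "row_strict P'"
    unfolding row_strict_def all_set_conv_all_nth
  proof (intro allI impI)
    fix i assume "i < length P'"
    then have i: "i < length T'" using lenP' by simp
    have s1: "sorted_wrt (<) (if i < length P then filter (\<lambda>x. b \<le> x) (P!i) else [])"
      using I3 unfolding row_strict_def by (auto intro: sorted_wrt_filter)
    show "sorted_wrt (<) (P'!i)" unfolding P'nth[OF i] sorted_wrt_append
      using T'sorted[OF i] s1 T'el[OF i] by (auto split: if_splits intro: less_le_trans)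
  qed
  have J4: "row_strict Q'"
    unfolding row_strict_def all_set_conv_all_nth
  proof (intro allI impI)
    fix i assume "i < length Q'"
    then have i: "i < length T'" using lenQ' by simp
    show "sorted_wrt (<) (Q'!i)"
    proof (cases "i < length Q \<and> i = j")
      case True
      have "\<forall>x\<in>set (Q!i). b < x"
      proof
        fix x assume x: "x \<in> set (Q!i)"
        have "m \<le> x" using I8 True x nth_mem by blast
        moreover have "x \<noteq> b" using jl_lt[of i] True x by auto
        ultimately show "b < x" using bm' by auto
      qed
      moreover have "sorted_wrt (<) (Q!i)" using I4 True unfolding row_strict_def by auto
      ultimately show ?thesis using Q'nth[OF i] True by simp
    next
      case False
      then show ?thesis using Q'nth[OF i] I4 unfolding row_strict_def by auto
    qed
  qed
  have J5: "pos_entries P'" unfolding pos_entries_def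
  proof (intro ballI)
    fix r x assume r: "r \<in> set P'" and x: "x \<in> set r"
    then obtain i where i0: "i < length P'" "r = P'!i" by (auto simp: in_set_conv_nth)
    then have i: "i < length T'" using lenP' by simp
    show "0 < x" using P'nth[OF i] T'el[OF i] I5 x i0(2) unfolding pos_entries_def by (auto split: if_splits)
  qed
  have J6: "pos_entries Q'" unfolding pos_entries_def
  proof (intro ballI)
    fix r x assume r: "r \<in> set Q'" and x: "x \<in> set r"
    then obtain i where i0: "i < length Q'" "r = Q'!i" by (auto simp: in_set_conv_nth)
    then have i: "i < length T'" using lenQ' by simp
    show "0 < x" using Q'nth[OF i] I6 a x i0(2) unfolding pos_entries_def by (auto split: if_splits)
  qed
  have J7: "\<forall>r\<in>set Q'. r \<noteq> []"
    unfolding all_set_conv_all_nth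
  proof (intro allI impI)
    fix i assume "i < length Q'"
    then have i: "i < length T'" using lenQ' by simp
    show "Q'!i \<noteq> []" using Q'nth[OF i] I7 by auto
  qed
  have J8: "\<forall>r\<in>set Q'. \<forall>x\<in>set r. b \<le> x"
    unfolding all_set_conv_all_nth using Q'ge lenQ' by auto
  have J9: "ss (map (filter (\<lambda>x. x < b)) P')" using filtP' ssT' by simp
  have J10: "\<forall>t i. Suc i < length P' \<longrightarrow> cnt_ge t (P'!i) + cnt_ge t (Q'!Suc i) \<le> cnt_ge t (P'!Suc i) + cnt_ge t (Q'!i)"
  proof (intro allI impI)
    fix t i assume "Suc i < length P'"
    then have si: "Suc i < length T'" and i: "i < length T'" using lenP' by auto
    show "cnt_ge t (P'!i) + cnt_ge t (Q'!Suc i) \<le> cnt_ge t (P'!Suc i) + cnt_ge t (Q'!i)"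
    proof (cases "t \<le> b")
      case True
      have d: "cnt_lt t (T'!Suc i) \<le> cnt_lt t (T'!i)" using T'dom[OF si] dom_row_def by auto
      show ?thesis using cnt_lt_ge[of t "P'!i"] cnt_lt_ge[of t "P'!Suc i"] cP_lo[OF i True] cP_lo[OF si True]
        cQ_lo[OF i True] cQ_lo[OF si True] shape[OF i] shape[OF si] d by linarith
    next
      case False
      then have bt: "b \<le> t" "b < t" by auto
      show ?thesis
      proof (cases "Suc i < length P")
        case True
        then show ?thesis using cP_hi[OF i bt(1)] cP_hi[OF si bt(1)] cQ_hi[OF i bt(2)] cQ_hi[OF si bt(2)] I1 I10 by auto
      next
        case False
        then have e: "Suc i = length P" using si ri by (auto split: if_splits)
        have "cnt_ge t (P!i) \<le> cnt_ge (Suc t) (Q!i)" using I11 e by simp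
        then have "cnt_ge t (P!i) \<le> cnt_ge t (Q!i)" using cnt_ge_mono[of t "Suc t" "Q!i"] by simp
        then show ?thesis using cP_hi[OF i bt(1)] cP_hi[OF si bt(1)] cQ_hi[OF i bt(2)] cQ_hi[OF si bt(2)] I1 e by auto
      qed
    qed
  qed
  have J11: "\<forall>t i. i < length P' \<longrightarrow> cnt_ge t (P'!i) \<le> cnt_ge (Suc t) (Q'!i)"
  proof (intro allI impI)
    fix t i assume "i < length P'"
    then have i: "i < length T'" using lenP' by auto
    show "cnt_ge t (P'!i) \<le> cnt_ge (Suc t) (Q'!i)"
    proof (cases "b \<le> t")
      case True
      show ?thesis
      proof (cases "i < length P")
        case True
        have h1: "cnt_ge t (P!i) \<le> cnt_ge (Suc t) (Q!i)" using I11 True by simp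
        have h2: "cnt_ge (Suc t) (Q!i) \<le> cnt_ge (Suc t) (Q'!i)" using cQ_mono[of i "Suc t"] I1 True by simp
        show ?thesis using cP_hi[OF i \<open>b \<le> t\<close>] True h1 h2 by simp
      next
        case False
        then show ?thesis using cP_hi[OF i \<open>b \<le> t\<close>] by simp
      qed
    next
      case False
      then have "Suc t \<le> b" by simp
      then show ?thesis using cQ_lo[OF i] shape[OF i] cnt_ge_le_len[of t "P'!i"] by simp
    qed
  qed
  have J12: "\<forall>i<length Q'. b \<in> set (Q'!i) \<longrightarrow> i \<le> j \<and> chain (map (filter (\<lambda>x. x < b)) P') a j"
  proof (intro allI impI)
    fix i assume "i < length Q'" and bi: "b \<in> set (Q'!i)"
    then have i: "i < length T'" using lenQ' by simp
    have ch: "chain (map (filter (\<lambda>x. x < b)) P') a j" using filtP' chainA[of a T] unfolding T'_def j_def by simp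
    have "i \<le> j"
    proof (cases "i < length Q")
      case True
      show ?thesis
      proof (cases "i = j")
        case False
        then have "b \<in> set (Q!i)" using bi Q'nth[OF i] True by simp
        then show ?thesis using jl_lt[OF True] by simp
      qed simp
    next
      case False
      then show ?thesis using i ri I1 by (auto split: if_splits)
    qed
    then show "i \<le> j \<and> chain (map (filter (\<lambda>x. x < b)) P') a j" using ch by simp
  qed
  show ?thesis unfolding bs bi fst_conv snd_conv Inv_def
    using J1 J2 J3 J4 J5 J6 J7 J8 J9 J10 J11 J12 by blast
qed

lemma Inv_fold:
  "Inv P Q m la jl \<Longrightarrow> \<forall>(a,b)\<in>set L. 0 < a \<and> a < b \<and> (b,a) \<le> (m,la) \<Longrightarrow>
   sorted_wrt (\<lambda>p q. prod.swap q \<le> prod.swap p) L \<Longrightarrow>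
   \<exists>m la jl. Inv (fst (foldl brsk_step (P,Q) L)) (snd (foldl brsk_step (P,Q) L)) m la jl"
proof (induction L arbitrary: P Q m la jl)
  case Nil then show ?case by auto
next
  case (Cons p L)
  obtain a b where p: "p = (a,b)" by (cases p)
  have ab: "0 < a" "a < b" "(b,a) \<le> (m,la)" using Cons.prems(2) p by auto
  have bm: "b < m \<or> (b = m \<and> a \<le> la)" using ab(3) by auto
  define P1 where "P1 = fst (brsk_step (P,Q) (a,b))"
  define Q1 where "Q1 = snd (brsk_step (P,Q) (a,b))"
  have I1: "Inv P1 Q1 b a (snd (bounded_insert b a P))" unfolding P1_def Q1_def
    using Inv_step[OF Cons.prems(1) ab(1) ab(2) bm] .
  have rest: "\<forall>(a',b')\<in>set L. 0 < a' \<and> a' < b' \<and> (b',a') \<le> (b,a)"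
    using Cons.prems(2,3) p by fastforce
  have srt: "sorted_wrt (\<lambda>p q. prod.swap q \<le> prod.swap p) L" using Cons.prems(3) by simp
  have e: "foldl brsk_step (P,Q) (p # L) = foldl brsk_step (P1,Q1) L"
    unfolding P1_def Q1_def p by simp
  show ?case unfolding e using Cons.IH[OF I1 rest srt] .
qed

lemma Inv_final:
  assumes "Inv P Q m la jl"
  shows "semistandard_bitableau P Q \<and> negative_bitableau P Q"
proof -
  from assms have
    I1: "length P = length Q" and I2: "\<forall>i<length P. length (P!i) = length (Q!i)" and
    I3: "row_strict P" and I4: "row_strict Q" and I5: "pos_entries P" and I6: "pos_entries Q" and
    I7: "\<forall>r\<in>set Q. r \<noteq> []" and
    I10: "\<forall>t i. Suc i < length P \<longrightarrow> cnt_ge t (P!i) + cnt_ge t (Q!Suc i) \<le> cnt_ge t (P!Suc i) + cnt_ge t (Q!i)" and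
    I11: "\<forall>t i. i < length P \<longrightarrow> cnt_ge t (P!i) \<le> cnt_ge (Suc t) (Q!i)"
    unfolding Inv_def by blast+
  have sh: "same_shape P Q" unfolding same_shape_def using I1 I2 by simp
  have d: "\<forall>i. Suc i < length P \<longrightarrow> diff_le (mset (P ! i)) (mset (Q ! i)) (mset (P ! Suc i)) (mset (Q ! Suc i))"
  proof (intro allI impI)
    fix i assume i: "Suc i < length P"
    show "diff_le (mset (P ! i)) (mset (Q ! i)) (mset (P ! Suc i)) (mset (Q ! Suc i))"
      unfolding diff_le_def
    proof (rule termwise_le_I)
      show "size (mset (P ! i) + mset (Q ! Suc i)) = size (mset (P ! Suc i) + mset (Q ! i))"
        using I2 i by simp
    next
      fix t
      show "size (filter_mset (\<lambda>x. t \<le> x) (mset (P ! i) + mset (Q ! Suc i)))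
          \<le> size (filter_mset (\<lambda>x. t \<le> x) (mset (P ! Suc i) + mset (Q ! i)))"
        using I10 i by (simp add: size_filter_mset_cnt)
    qed
  qed
  have n: "\<forall>i<length P. termwise_lt (mset (P ! i)) (mset (Q ! i))"
  proof (intro allI impI)
    fix i assume i: "i < length P"
    have "Q!i \<noteq> []" using I7 I1 i nth_mem by fastforce
    then have ne: "P!i \<noteq> []" using I2 i by (metis length_0_conv)
    show "termwise_lt (mset (P ! i)) (mset (Q ! i))"
    proof (rule termwise_lt_I)
      show "mset (P ! i) \<noteq> {#}" using ne by simp
      show "size (mset (P ! i)) = size (mset (Q ! i))" using I2 i by simp
    next
      fix t
      show "size (filter_mset (\<lambda>x. t \<le> x) (mset (P ! i))) \<le> size (filter_mset (\<lambda>x. Suc t \<le> x) (mset (Q ! i)))"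
        using I11 i by (simp add: size_filter_mset_cnt)
    qed
  qed
  show ?thesis unfolding semistandard_bitableau_def negative_bitableau_def
    using I3 I4 I5 I6 sh d n by blast
qed

theorem lemma6p2:
  fixes U :: "(nat \<times> nat) multiset"
  assumes "negative_mset U"
  shows "semistandard_bitableau (fst (BRSK U)) (snd (BRSK U)) \<and>
         negative_bitableau (fst (BRSK U)) (snd (BRSK U))"
proof -
  define m0 where "m0 = Suc (Max (insert 0 (snd ` set_mset U)))"
  have I0: "Inv [] [] m0 0 0" unfolding Inv_def row_strict_def pos_entries_def by simp
  have setL: "set (brsk_list U) = set_mset U"
    unfolding brsk_list_def by (simp add: image_image)
  have bm0: "\<And>a b. (a,b) \<in># U \<Longrightarrow> b < m0"
  proof -
    fix a b assume "(a,b) \<in># U"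
    then have "b \<in> insert 0 (snd ` set_mset U)" by force
    then have "b \<le> Max (insert 0 (snd ` set_mset U))" by simp
    then show "b < m0" unfolding m0_def by simp
  qed
  have L: "\<forall>(a,b)\<in>set (brsk_list U). 0 < a \<and> a < b \<and> (b,a) \<le> (m0,0)"
    using assms bm0 unfolding setL negative_mset_def by fastforce
  have S: "sorted_wrt (\<lambda>p q. prod.swap q \<le> prod.swap p) (brsk_list U)"
    unfolding brsk_list_def sorted_wrt_map sorted_wrt_rev
    using sorted_sorted_list_of_multiset[of "image_mset prod.swap U"] by (simp add: sorted_wrt_iff_nth_less)
  obtain m la jl where "Inv (fst (BRSK U)) (snd (BRSK U)) m la jl"
    using Inv_fold[OF I0 L S] unfolding BRSK_def by blast
  then show ?thesis using Inv_final by blast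
qed

end
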